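(* Let $A$ be a densely defined closed operator in a complex Hilbert space $\mathcal{H}$ such that $\operatorname{Num}(A)$ has an interior point and $\operatorname{Num}(A)\neq\mathbb{C}$. Let $\lambda\in\partial\operatorname{Num}(A)$ be a point of infinite upper curvature of $\partial\overline{\operatorname{Num}}(A)$. If $\lambda\in\operatorname{Num}(A)$, then $\lambda$ is an eigenvalue of $A$.
   Context: $\operatorname{Num}(A)=\{\langle Af,f\rangle: f\in\operatorname{D}(A),\|f\|=1\}$ is the numerical range (a convex set), $\overline{\operatorname{Num}}(A)$ its closure. Curvature conventions. Let $\Omega\subset\mathbb{C}$ be a closed convex set with nonempty interior and $\lambda\in\partial\Omega$. There is at least one supporting line of $\Omega$ through $\lambda$; $\lambda$ is called a corner point if there is more than one. If $\lambda$ is a corner point, $\Omega$ lies in a closed sector with vertex $\lambda$ and semivertical angle $<\pi/2$; take the smallest such sector and let $l_\lambda$ be the supporting line through $\lambda$ orthogonal to the axis of this sector; otherwise $l_\lambda$ is the unique supporting line. Use rectangular coordinates $(\xi,\eta)$ with origin at $\lambda$, $\xi$-axis equal to $l_\lambda$, oriented so that $\Omega\subset\{\eta\ge 0\}$. Let $D'_\varepsilon=\{(\xi,\eta):\xi^2+\eta^2\le\varepsilon^2,\ \xi\neq 0\}$. Define $\gamma_u^+(\lambda)=\lim_{\varepsilon\downarrow 0}\sup\{\eta/\xi^2:(\xi,\eta)\in\partial\Omega\cap D'_\varepsilon,\ \xi>0\}$ and $\gamma_l^+(\lambda)$ the same with $\inf$ in place of $\sup$; $\gamma_u^-(\lambda),\gamma_l^-(\lambda)$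 are defined analogously with $\xi<0$. Set $\gamma_u(\lambda)=\max(\gamma_u^+(\lambda),\gamma_u^-(\lambda))$, $\gamma_l(\lambda)=\min(\gamma_l^+(\lambda),\gamma_l^-(\lambda))$. The point $\lambda$ is of infinite upper curvature if $\gamma_u(\lambda)=\infty$, and of unilateral infinite curvature if $\gamma_l^+(\lambda)=\infty$ or $\gamma_l^-(\lambda)=\infty$. For an operator $A$, these notions at $\lambda\in\partial\operatorname{Num}(A)$ refer to $\Omega=\overline{\operatorname{Num}}(A)$. *)

theory Defs
  imports "HOL-Analysis.Analysis"
begin

text \<open>The inner product is linear in the first and conjugate linear in the
  second argument, so the numerical range consists of the values cinner (A f) f.\<close>

class complex_vector = real_vector +
  fixes scaleC :: "complex \<Rightarrow> 'a \<Rightarrow> 'a" (infixr "*\<^sub>C" 75)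
  assumes scaleC_add_right: "a *\<^sub>C (x + y) = a *\<^sub>C x + a *\<^sub>C y"
    and scaleC_add_left: "(a + b) *\<^sub>C x = a *\<^sub>C x + b *\<^sub>C x"
    and scaleC_scaleC: "a *\<^sub>C (b *\<^sub>C x) = (a * b) *\<^sub>C x"
    and scaleC_one: "1 *\<^sub>C x = x"
    and scaleR_scaleC: "scaleR r x = complex_of_real r *\<^sub>C x"

class complex_inner = complex_vector + real_normed_vector +
  fixes cinner :: "'a \<Rightarrow> 'a \<Rightarrow> complex"
  assumes cinner_commute: "cinner x y = cnj (cinner y x)"
    and cinner_add_left: "cinner (x + y) z = cinner x z + cinner y z"
    and cinner_scaleC_left: "cinner (a *\<^sub>C x) y = a * cinner x y"
    and cinner_self_nonneg: "0 \<le> Re (cinner x x)"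
    and norm_eq_sqrt_cinner: "norm x = sqrt (Re (cinner x x))"

class chilbert_space = complex_inner + complete_space

text \<open>Consistency check: the complex numbers form a complex Hilbert space.\<close>

instantiation complex :: chilbert_space
begin
definition scaleC_complex :: "complex \<Rightarrow> complex \<Rightarrow> complex" where
  "scaleC_complex a x = a * x"
definition cinner_complex :: "complex \<Rightarrow> complex \<Rightarrow> complex" where
  "cinner_complex x y = x * cnj y"
instance
proof
  fix a b x y z :: complex and r :: real
  show "a *\<^sub>C (x + y) = a *\<^sub>C x + a *\<^sub>C y" by (simp add: scaleC_complex_def algebra_simps)
  show "(a + b) *\<^sub>C x = a *\<^sub>C x + b *\<^sub>C x" by (simp add: scaleC_complex_def algebra_simps)
  show "a *\<^sub>C (b *\<^sub>C x) = (a * b) *\<^sub>C x" by (simp add: scaleC_complex_def)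
  show "1 *\<^sub>C x = x" by (simp add: scaleC_complex_def)
  show "scaleR r x = complex_of_real r *\<^sub>C x" by (simp add: scaleC_complex_def scaleR_conv_of_real)
  show "cinner x y = cnj (cinner y x)" by (simp add: cinner_complex_def)
  show "cinner (x + y) z = cinner x z + cinner y z" by (simp add: cinner_complex_def algebra_simps)
  show "cinner (a *\<^sub>C x) y = a * cinner x y" by (simp add: cinner_complex_def scaleC_complex_def)
  show "0 \<le> Re (cinner x x)" by (simp add: cinner_complex_def complex_mult_cnj)
  show "norm x = sqrt (Re (cinner x x))"
    by (simp add: cinner_complex_def complex_mult_cnj cmod_def)
qed
end

text \<open>A (possibly unbounded) operator is a map T defined on a domain D (values outside D
  are irrelevant).\<close>

definition linear_operator :: "'a::complex_vector set \<Rightarrow> ('a \<Rightarrow> 'a) \<Rightarrow> bool" where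
  "linear_operator D T \<longleftrightarrow> 0 \<in> D \<and>
     (\<forall>x\<in>D. \<forall>y\<in>D. x + y \<in> D \<and> T (x + y) = T x + T y) \<and>
     (\<forall>c. \<forall>x\<in>D. c *\<^sub>C x \<in> D \<and> T (c *\<^sub>C x) = c *\<^sub>C T x)"

definition densely_defined :: "'a::topological_space set \<Rightarrow> bool" where
  "densely_defined D \<longleftrightarrow> closure D = UNIV"

definition closed_operator :: "'a::complex_inner set \<Rightarrow> ('a \<Rightarrow> 'a) \<Rightarrow> bool" where
  "closed_operator D T \<longleftrightarrow> closed {(x, T x) | x. x \<in> D}"

definition numerical_range :: "'a::complex_inner set \<Rightarrow> ('a \<Rightarrow> 'a) \<Rightarrow> complex set" where
  "numerical_range D T = {cinner (T f) f | f. f \<in> D \<and> norm f = 1}"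

definition eigenvalue :: "'a::complex_vector set \<Rightarrow> ('a \<Rightarrow> 'a) \<Rightarrow> complex \<Rightarrow> bool" where
  "eigenvalue D T \<mu> \<longleftrightarrow> (\<exists>f\<in>D. f \<noteq> 0 \<and> T f = \<mu> *\<^sub>C f)"

definition supporting_line :: "complex set \<Rightarrow> complex \<Rightarrow> complex set \<Rightarrow> bool" where
  "supporting_line \<Omega> \<mu> L \<longleftrightarrow> (\<exists>n. norm n = 1 \<and> L = {z. Re (cnj n * (z - \<mu>)) = 0} \<and>
      ((\<forall>z\<in>\<Omega>. 0 \<le> Re (cnj n * (z - \<mu>))) \<or> (\<forall>z\<in>\<Omega>. Re (cnj n * (z - \<mu>)) \<le> 0)))"

definition corner_point :: "complex set \<Rightarrow> complex \<Rightarrow> bool" where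
  "corner_point \<Omega> \<mu> \<longleftrightarrow> (\<exists>L1 L2. supporting_line \<Omega> \<mu> L1 \<and> supporting_line \<Omega> \<mu> L2 \<and> L1 \<noteq> L2)"

text \<open>Closed sector with vertex \<mu>, axis direction d (a unit vector) and semivertical angle \<alpha>.\<close>

definition sector :: "complex \<Rightarrow> complex \<Rightarrow> real \<Rightarrow> complex set" where
  "sector \<mu> d \<alpha> = {z. cos \<alpha> * norm (z - \<mu>) \<le> Re (cnj d * (z - \<mu>))}"

definition smallest_sector :: "complex set \<Rightarrow> complex \<Rightarrow> complex \<Rightarrow> real \<Rightarrow> bool" where
  "smallest_sector \<Omega> \<mu> d \<alpha> \<longleftrightarrow> norm d = 1 \<and> 0 \<le> \<alpha> \<and> \<alpha> < pi / 2 \<and> \<Omega> \<subseteq> sector \<mu> d \<alpha> \<and>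
     (\<forall>d' \<alpha>'. norm d' = 1 \<and> 0 \<le> \<alpha>' \<and> \<alpha>' < pi / 2 \<and> \<Omega> \<subseteq> sector \<mu> d' \<alpha>' \<longrightarrow>
        sector \<mu> d \<alpha> \<subseteq> sector \<mu> d' \<alpha>')"

text \<open>n is the unit vector in the direction of the positive eta-axis of the curvature
  coordinate system at \<mu>: the xi-axis is the line l_\<mu> = {z. Re (cnj n * (z - \<mu>)) = 0},
  and \<Omega> lies in {eta \<ge> 0}. At a corner point l_\<mu> is orthogonal to the axis d of the
  smallest sector, so n = d; otherwise l_\<mu> is the unique supporting line.\<close>

definition curvature_frame :: "complex set \<Rightarrow> complex \<Rightarrow> complex \<Rightarrow> bool" where
  "curvature_frame \<Omega> \<mu> n \<longleftrightarrow> norm n = 1 \<and> (\<forall>z\<in>\<Omega>. 0 \<le> Re (cnj n * (z - \<mu>))) \<and>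
     (if corner_point \<Omega> \<mu> then (\<exists>\<alpha>. smallest_sector \<Omega> \<mu> n \<alpha>)
      else supporting_line \<Omega> \<mu> {z. Re (cnj n * (z - \<mu>)) = 0})"

text \<open>Coordinates (xi, eta) of z in the frame with origin \<mu> and eta-direction n.
  (The orientation of the xi-axis is irrelevant for the notions used below.)\<close>

definition xi_coord :: "complex \<Rightarrow> complex \<Rightarrow> complex \<Rightarrow> real" where
  "xi_coord \<mu> n z = Im (cnj n * (z - \<mu>))"

definition eta_coord :: "complex \<Rightarrow> complex \<Rightarrow> complex \<Rightarrow> real" where
  "eta_coord \<mu> n z = Re (cnj n * (z - \<mu>))"

definition bdry_right :: "complex set \<Rightarrow> complex \<Rightarrow> complex \<Rightarrow> real \<Rightarrow> complex set" where
  "bdry_right \<Omega> \<mu> n \<epsilon> = {z \<in> frontier \<Omega>.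
     (xi_coord \<mu> n z)\<^sup>2 + (eta_coord \<mu> n z)\<^sup>2 \<le> \<epsilon>\<^sup>2 \<and> xi_coord \<mu> n z \<noteq> 0 \<and> xi_coord \<mu> n z > 0}"

definition bdry_left :: "complex set \<Rightarrow> complex \<Rightarrow> complex \<Rightarrow> real \<Rightarrow> complex set" where
  "bdry_left \<Omega> \<mu> n \<epsilon> = {z \<in> frontier \<Omega>.
     (xi_coord \<mu> n z)\<^sup>2 + (eta_coord \<mu> n z)\<^sup>2 \<le> \<epsilon>\<^sup>2 \<and> xi_coord \<mu> n z \<noteq> 0 \<and> xi_coord \<mu> n z < 0}"

definition curv_quot :: "complex \<Rightarrow> complex \<Rightarrow> complex \<Rightarrow> ereal" where
  "curv_quot \<mu> n z = ereal (eta_coord \<mu> n z / (xi_coord \<mu> n z)\<^sup>2)"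

definition gamma_u_plus :: "complex set \<Rightarrow> complex \<Rightarrow> complex \<Rightarrow> ereal" where
  "gamma_u_plus \<Omega> \<mu> n = Lim (at_right (0::real)) (\<lambda>\<epsilon>. SUP z\<in>bdry_right \<Omega> \<mu> n \<epsilon>. curv_quot \<mu> n z)"

definition gamma_u_minus :: "complex set \<Rightarrow> complex \<Rightarrow> complex \<Rightarrow> ereal" where
  "gamma_u_minus \<Omega> \<mu> n = Lim (at_right (0::real)) (\<lambda>\<epsilon>. SUP z\<in>bdry_left \<Omega> \<mu> n \<epsilon>. curv_quot \<mu> n z)"

definition gamma_u :: "complex set \<Rightarrow> complex \<Rightarrow> complex \<Rightarrow> ereal" where
  "gamma_u \<Omega> \<mu> n = max (gamma_u_plus \<Omega> \<mu> n) (gamma_u_minus \<Omega> \<mu> n)"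

text \<open>\<mu> is of infinite upper curvature (for a closed convex \<Omega> with nonempty interior and
  \<mu> on its boundary; the frame n is then unique).\<close>

definition infinite_upper_curvature :: "complex set \<Rightarrow> complex \<Rightarrow> bool" where
  "infinite_upper_curvature \<Omega> \<mu> \<longleftrightarrow> (\<exists>n. curvature_frame \<Omega> \<mu> n \<and> gamma_u \<Omega> \<mu> n = \<infinity>)"

end

theory Submission
  imports Defs
begin


lemma scaleC_zero_right[simp]: "a *\<^sub>C 0 = 0"
proof -
  have "a *\<^sub>C (0 + 0) = a *\<^sub>C 0 + a *\<^sub>C 0" by (rule scaleC_add_right)
  thus ?thesis by simp
qed
lemma scaleC_zero_left[simp]: "0 *\<^sub>C x = 0"
proof -
  have "(0 + 0) *\<^sub>C x = 0 *\<^sub>C x + 0 *\<^sub>C x" by (rule scaleC_add_left)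
  thus ?thesis by simp
qed
lemma scaleC_minus_left: "(- a) *\<^sub>C x = - (a *\<^sub>C x)"
proof -
  have "(- a) *\<^sub>C x + a *\<^sub>C x = 0" by (simp flip: scaleC_add_left)
  thus ?thesis by (simp add: eq_neg_iff_add_eq_0)
qed
lemma scaleC_minus_right: "a *\<^sub>C (- x) = - (a *\<^sub>C x)"
proof -
  have "a *\<^sub>C (- x) + a *\<^sub>C x = 0" by (simp flip: scaleC_add_right)
  thus ?thesis by (simp add: eq_neg_iff_add_eq_0)
qed
lemma scaleC_diff_right: "a *\<^sub>C (x - y) = a *\<^sub>C x - a *\<^sub>C y"
  by (simp only: diff_conv_add_uminus scaleC_add_right scaleC_minus_right)
lemma scaleC_diff_left: "(a - b) *\<^sub>C x = a *\<^sub>C x - b *\<^sub>C x"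
  by (simp only: diff_conv_add_uminus scaleC_add_left scaleC_minus_left)
lemma scaleC_real: "complex_of_real r *\<^sub>C x = r *\<^sub>R x"
  by (simp add: scaleR_scaleC)

lemma cinner_zero_left[simp]: "cinner 0 y = 0"
  using cinner_add_left[of 0 0 y] by simp
lemma cinner_add_right: "cinner x (y + z) = cinner x y + cinner x z"
proof -
  have "cinner x (y + z) = cnj (cinner (y + z) x)" by (rule cinner_commute)
  also have "\<dots> = cnj (cinner y x) + cnj (cinner z x)" by (simp add: cinner_add_left)
  also have "cnj (cinner y x) = cinner x y" by (rule cinner_commute[symmetric])
  also have "cnj (cinner z x) = cinner x z" by (rule cinner_commute[symmetric])
  finally show ?thesis .
qed
lemma cinner_scaleC_right: "cinner x (a *\<^sub>C y) = cnj a * cinner x y"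
proof -
  have "cinner x (a *\<^sub>C y) = cnj (cinner (a *\<^sub>C y) x)" by (rule cinner_commute)
  also have "\<dots> = cnj a * cnj (cinner y x)" by (simp add: cinner_scaleC_left)
  also have "cnj (cinner y x) = cinner x y" by (rule cinner_commute[symmetric])
  finally show ?thesis .
qed
lemma cinner_zero_right[simp]: "cinner x 0 = 0"
proof -
  have "cinner x 0 = cnj (cinner 0 x)" by (rule cinner_commute)
  thus ?thesis by simp
qed
lemma cinner_minus_left: "cinner (- x) y = - cinner x y"
proof -
  have "cinner x y + cinner (- x) y = cinner (x + - x) y" by (rule cinner_add_left[symmetric])
  also have "\<dots> = 0" by simp
  finally have "cinner x y + cinner (- x) y = 0" .
  thus ?thesis by (rule add_eq_0_iff[THEN iffD1])
qed
lemma cinner_minus_right: "cinner x (- y) = - cinner x y"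
proof -
  have "cinner x (- y) = cnj (cinner (- y) x)" by (rule cinner_commute)
  also have "\<dots> = - cnj (cinner y x)" by (simp add: cinner_minus_left)
  finally show ?thesis using cinner_commute[of x y] by simp
qed
lemma cinner_diff_left: "cinner (x - y) z = cinner x z - cinner y z"
  by (simp only: diff_conv_add_uminus cinner_add_left cinner_minus_left)
lemma cinner_diff_right: "cinner x (y - z) = cinner x y - cinner x z"
  by (simp only: diff_conv_add_uminus cinner_add_right cinner_minus_right)
lemma cinner_self_Im: "Im (cinner x x) = 0"
proof -
  have "Im (cinner x x) = Im (cnj (cinner x x))" using arg_cong[OF cinner_commute[of x x], of Im] .
  thus ?thesis by simp
qed
lemma cinner_self_real: "cinner x x = complex_of_real (Re (cinner x x))"
  using cinner_self_Im by (simp add: complex_eq_iff)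
lemma norm_sq_cinner: "(norm x)\<^sup>2 = Re (cinner x x)"
  by (simp add: norm_eq_sqrt_cinner cinner_self_nonneg)
lemma cinner_self_eq0: "cinner x x = 0 \<longleftrightarrow> x = 0"
proof
  assume "cinner x x = 0"
  hence "norm x = 0" by (simp add: norm_eq_sqrt_cinner)
  thus "x = 0" by simp
qed simp

lemma cinner_real_scale_both:
  fixes x :: "'a::complex_inner"
  shows "cinner (complex_of_real r *\<^sub>C y) (complex_of_real r *\<^sub>C x) = complex_of_real (r*r) * cinner y x"
  by (simp add: cinner_scaleC_left cinner_scaleC_right)

lemma norm_diff_sq:
  fixes x y :: "'a::complex_inner"
  shows "(norm (x - y))\<^sup>2 = (norm x)\<^sup>2 + (norm y)\<^sup>2 - 2 * Re (cinner x y)"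
proof -
  have "cinner (x - y) (x - y) = cinner x x - cinner x y - cinner y x + cinner y y"
    by (simp add: cinner_diff_left cinner_diff_right)
  moreover have "Re (cinner y x) = Re (cinner x y)" by (subst cinner_commute) simp
  ultimately show ?thesis by (simp add: norm_sq_cinner)
qed


lemma lim_bound:
  fixes F :: "real \<Rightarrow> ereal"
  assumes mono: "\<And>a b. 0<a \<Longrightarrow> a \<le> b \<Longrightarrow> F a \<le> F b" and h: "0 < h"
    and bd: "\<And>e. 0<e \<Longrightarrow> e<h \<Longrightarrow> F e \<le> ereal K"
  shows "Lim (at_right 0) F \<le> ereal K"
proof -
  define l where "l = (INF e\<in>{0<..}. F e)"
  have "(F \<longlongrightarrow> l) (at_right 0)"
  proof (rule decreasing_tendsto)
    show "\<forall>\<^sub>F n in at_right 0. l \<le> F n"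
      unfolding l_def eventually_at_right_field by (auto intro!: exI[of _ 1] INF_lower)
    fix x assume "l < x"
    then obtain e where e: "e > 0" "F e < x" unfolding l_def by (auto simp: INF_less_iff)
    show "\<forall>\<^sub>F n in at_right 0. F n < x"
      unfolding eventually_at_right_field using e mono
      by (intro exI[of _ e]) (meson less_imp_le order_le_less_trans)
  qed
  hence "Lim (at_right 0) F = l" by (intro tendsto_Lim) auto
  also have "l \<le> F (h/2)" unfolding l_def using h by (intro INF_lower) auto
  also have "\<dots> \<le> ereal K" using bd h by auto
  finally show ?thesis .
qed


lemma cmod_mult_self: "cmod z * cmod z = Re z * Re z + Im z * Im z"
  by (metis cmod_power2 power2_eq_square)

lemma Z_zero:
  fixes C B E :: complex
  assumes "\<And>t. 0 \<le> Re (cnj t * C + t * B + t * cnj t * E)" and "0 \<le> Re E"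
  shows "B = - cnj C"
proof (rule ccontr)
  define Z where "Z = B + cnj C"
  assume "B \<noteq> - cnj C"
  hence Z: "Z \<noteq> 0" unfolding Z_def by (auto simp: add_eq_0_iff2)
  define \<beta> where "\<beta> = Re E"
  have bnn: "0 \<le> \<beta>" using assms(2) by (simp add: \<beta>_def)
  define \<delta> where "\<delta> = 1 / (\<beta> + 1)"
  have dpos: "\<delta> > 0" using bnn by (simp add: \<delta>_def)
  define t where "t = - complex_of_real \<delta> * cnj Z"
  have za: "Z * cnj Z = complex_of_real ((cmod Z)\<^sup>2)" by (rule complex_norm_square[symmetric])
  have "Re (cnj t * C + t * B) = Re (t * Z)" unfolding Z_def by (simp add: algebra_simps)
  also have "\<dots> = - \<delta> * (cmod Z)\<^sup>2" unfolding t_def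
    by (simp add: power2_eq_square cmod_mult_self algebra_simps)
  finally have l: "Re (cnj t * C + t * B) = - \<delta> * (cmod Z)\<^sup>2" .
  have tt: "t * cnj t = complex_of_real (\<delta>\<^sup>2 * (cmod Z)\<^sup>2)"
    unfolding t_def using za by (simp add: power2_eq_square mult_ac)
  have "Re (t * cnj t * E) = \<delta>\<^sup>2 * (cmod Z)\<^sup>2 * \<beta>" by (simp add: tt \<beta>_def)
  with l assms(1)[of t] have "0 \<le> - \<delta> * (cmod Z)\<^sup>2 + \<delta>\<^sup>2 * (cmod Z)\<^sup>2 * \<beta>" by simp
  hence "0 \<le> \<delta> * (cmod Z)\<^sup>2 * (\<delta> * \<beta> - 1)" by (simp add: algebra_simps power2_eq_square)
  moreover have "\<delta> * (cmod Z)\<^sup>2 > 0" using dpos Z by simp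
  ultimately have "\<delta> * \<beta> - 1 \<ge> 0" by (simp add: zero_le_mult_iff)
  moreover have "\<delta> * \<beta> < 1" using bnn by (simp add: \<delta>_def field_simps)
  ultimately show False by simp
qed

lemma sq_diff_le: "(a - b)\<^sup>2 \<le> 2*a\<^sup>2 + 2*(b::real)\<^sup>2"
proof -
  have "2*a\<^sup>2 + 2*b\<^sup>2 - (a-b)\<^sup>2 = (a+b)\<^sup>2" by (simp add: power2_eq_square algebra_simps)
  moreover have "0 \<le> (a+b)\<^sup>2" by simp
  ultimately show ?thesis by linarith
qed

lemma fill:
  fixes n C E \<mu> :: complex and G :: real and S :: "complex set"
  assumes n1: "cmod n = 1" and G: "G > 0" and C: "C \<noteq> 0" and bpos: "Re E > 0"
    and pt: "\<And>t. \<mu> + n * ((cnj t * C - t * cnj C + t * cnj t * E) / (1 + t * cnj t * complex_of_real G)) \<in> S"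
  shows "\<exists>K h0. 0 \<le> K \<and> 0 < h0 \<and> (\<forall>y. 0 < Re (cnj n * (y - \<mu>)) \<and> Re (cnj n * (y - \<mu>)) < h0 \<and>
            K * (Im (cnj n * (y - \<mu>)))\<^sup>2 < Re (cnj n * (y - \<mu>)) \<longrightarrow> y \<in> S)"
proof -
  define \<beta> where "\<beta> = Re E"
  define \<gamma> where "\<gamma> = Im E"
  define \<rho> where "\<rho> = cmod C * cmod C"
  have rho: "\<rho> > 0" using C by (simp add: \<rho>_def)
  have b: "\<beta> > 0" using bpos by (simp add: \<beta>_def)
  define K where "K = 4 * \<beta> / \<rho>"
  define h0 where "h0 = min (\<beta> / (2 * G)) (\<rho> * \<beta> / (2 * \<gamma>\<^sup>2 + 2))"
  have K: "K \<ge> 0" using b rho by (simp add: K_def)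
  have g2: "2 * \<gamma>\<^sup>2 + 2 > 0" by (simp add: add_nonneg_pos)
  have h0: "h0 > 0" using b rho G g2 by (simp add: h0_def)
  have nn: "n * cnj n = 1" using n1 by (metis complex_norm_square mult.commute of_real_1 power_one)
  have CC: "C * cnj C = complex_of_real \<rho>" unfolding \<rho>_def
    by (metis complex_norm_square of_real_mult power2_eq_square)
  show ?thesis
  proof (intro exI conjI allI impI)
    fix y assume asm: "0 < Re (cnj n * (y - \<mu>)) \<and> Re (cnj n * (y - \<mu>)) < h0 \<and>
            K * (Im (cnj n * (y - \<mu>)))\<^sup>2 < Re (cnj n * (y - \<mu>))"
    define w where "w = cnj n * (y - \<mu>)"
    define \<eta> where "\<eta> = Re w"
    define \<xi> where "\<xi> = Im w"
    have e0: "\<eta> > 0" and eh: "\<eta> < h0" and eK: "K * \<xi>\<^sup>2 < \<eta>" using asm by (auto simp: w_def \<eta>_def \<xi>_def)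
    have eG: "\<eta> * G < \<beta> / 2" using eh G by (simp add: h0_def field_simps)
    have eg: "\<eta> < \<rho> * \<beta> / (2 * \<gamma>\<^sup>2 + 2)" using eh by (simp add: h0_def)
    define T where "T = \<eta> / (\<beta> - \<eta> * G)"
    have den: "\<beta> - \<eta> * G > \<beta> / 2" using eG by simp
    have den2: "\<beta> - \<eta> * G \<le> \<beta>" using e0 G by simp
    have T0: "T > 0" using e0 den b by (simp add: T_def)
    have Tup: "T \<le> 2 * \<eta> / \<beta>" using e0 den b by (simp add: T_def field_simps)
    have Tlo: "\<eta> / \<beta> \<le> T" using e0 den den2 b unfolding T_def by (intro divide_left_mono) auto
    have TG: "T * G \<le> 1"
    proof -
      have "T * G \<le> 2 * \<eta> / \<beta> * G" using Tup G by (intro mult_right_mono) auto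
      also have "\<dots> = 2 * (\<eta> * G) / \<beta>" by simp
      also have "\<dots> \<le> 1" using eG b by (simp add: field_simps)
      finally show ?thesis .
    qed
    have Teq: "T * (\<beta> - \<eta> * G) = \<eta>" using den b by (simp add: T_def)
    define q where "q = (T * \<gamma> - \<xi> * (1 + T * G)) / (2 * \<rho>)"
    have qq: "\<rho> * q\<^sup>2 \<le> T"
    proof -
      have "2 * \<rho> * q = T * \<gamma> - \<xi> * (1 + T * G)" using rho unfolding q_def by simp
      hence "(2 * \<rho> * q)\<^sup>2 = (T * \<gamma> - \<xi> * (1 + T * G))\<^sup>2" by simp
      also have "\<dots> \<le> 2 * (T * \<gamma>)\<^sup>2 + 2 * (\<xi> * (1 + T * G))\<^sup>2"
        by (rule sq_diff_le)
      also have "\<dots> \<le> 2 * (T * \<gamma>)\<^sup>2 + 8 * \<xi>\<^sup>2"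
      proof -
        have "(1 + T * G)\<^sup>2 \<le> 2\<^sup>2" using TG T0 G by (intro power_mono) auto
        hence "\<xi>\<^sup>2 * (1 + T * G)\<^sup>2 \<le> \<xi>\<^sup>2 * 4" by (intro mult_left_mono) auto
        thus ?thesis by (simp add: power_mult_distrib)
      qed
      also have "\<dots> \<le> 2 * \<rho> * T + 2 * \<rho> * T"
      proof -
        have "T \<le> \<rho> / (\<gamma>\<^sup>2 + 1)"
        proof -
          have "T \<le> 2 * \<eta> / \<beta>" by (rule Tup)
          also have "\<dots> \<le> 2 * (\<rho> * \<beta> / (2 * \<gamma>\<^sup>2 + 2)) / \<beta>" using eg b by (intro divide_right_mono) auto
          also have "\<dots> = \<rho> / (\<gamma>\<^sup>2 + 1)"
          proof -
            define d where "d = \<gamma>\<^sup>2 + 1"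
            have g1: "d > 0" unfolding d_def by (simp add: add_nonneg_pos)
            have e: "2 * \<gamma>\<^sup>2 + 2 = 2 * d" by (simp add: d_def)
            have "2 * (\<rho> * \<beta> / (2 * d)) / \<beta> = \<rho> / d" using b g1 by (simp add: field_simps)
            thus ?thesis unfolding e d_def .
          qed
          finally show ?thesis .
        qed
        hence "T * (\<gamma>\<^sup>2 + 1) \<le> \<rho>" by (simp add: pos_le_divide_eq add_nonneg_pos)
        hence t1: "T * \<gamma>\<^sup>2 \<le> \<rho>" using T0 by (simp add: algebra_simps)
        have "2 * (T * \<gamma>)\<^sup>2 = 2 * T * (T * \<gamma>\<^sup>2)" by (simp add: power2_eq_square)
        also have "\<dots> \<le> 2 * T * \<rho>" using t1 T0 by (intro mult_left_mono) auto
        finally have a1: "2 * (T * \<gamma>)\<^sup>2 \<le> 2 * \<rho> * T" by (simp add: mult.commute)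
        have "4 * \<beta> / \<rho> * \<xi>\<^sup>2 < \<eta>" using eK by (simp add: K_def)
        hence "4 * \<beta> * \<xi>\<^sup>2 < \<eta> * \<rho>" using rho by (simp add: field_simps)
        hence "4 * \<xi>\<^sup>2 < \<eta> / \<beta> * \<rho>" using b by (simp add: field_simps)
        also have "\<dots> \<le> T * \<rho>" using Tlo rho by (intro mult_right_mono) auto
        finally have a2: "8 * \<xi>\<^sup>2 \<le> 2 * \<rho> * T" by simp
        show ?thesis using a1 a2 by (simp add: mult.commute)
      qed
      finally have "4 * \<rho> * (\<rho> * q\<^sup>2) \<le> 4 * \<rho> * T" by (simp add: power2_eq_square algebra_simps)
      thus ?thesis using rho by simp
    qed
    define p where "p = sqrt (T / \<rho> - q\<^sup>2)"
    have pp: "p\<^sup>2 = T / \<rho> - q\<^sup>2" unfolding p_def using qq rho by (simp add: field_simps)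
    define t where "t = Complex p q * C"
    have tt: "t * cnj t = complex_of_real T"
    proof -
      have "t * cnj t = (Complex p q * cnj (Complex p q)) * (C * cnj C)" by (simp add: t_def mult_ac)
      also have "\<dots> = complex_of_real (p\<^sup>2 + q\<^sup>2) * complex_of_real \<rho>"
        by (simp only: CC) (simp add: complex_mult_cnj)
      also have "\<dots> = complex_of_real ((p\<^sup>2 + q\<^sup>2) * \<rho>)" by simp
      also have "(p\<^sup>2 + q\<^sup>2) * \<rho> = T" using pp rho by (simp add: field_simps)
      finally show ?thesis .
    qed
    have lin: "cnj t * C - t * cnj C = Complex 0 (- 2 * q * \<rho>)"
    proof -
      have "cnj t * C - t * cnj C = (cnj (Complex p q) - Complex p q) * (C * cnj C)"
        by (simp add: t_def algebra_simps)
      also have "\<dots> = Complex 0 (- 2 * q * \<rho>)" by (simp only: CC) (simp add: complex_eq_iff)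
      finally show ?thesis .
    qed
    have X: "cnj t * C - t * cnj C + t * cnj t * E = w * (1 + t * cnj t * complex_of_real G)"
    proof -
      have r: "T * \<beta> = \<eta> * (1 + T * G)" using Teq by (simp add: algebra_simps)
      have i: "- 2 * q * \<rho> + T * \<gamma> = \<xi> * (1 + T * G)" using rho by (simp add: q_def field_simps)
      show ?thesis unfolding lin tt using r i
        by (simp add: complex_eq_iff \<eta>_def \<xi>_def \<beta>_def \<gamma>_def algebra_simps)
    qed
    have d: "1 + t * cnj t * complex_of_real G \<noteq> 0"
    proof -
      have "1 + t * cnj t * complex_of_real G = complex_of_real (1 + T * G)" by (simp add: tt)
      moreover have "1 + T * G > 0" using T0 G by (simp add: add_pos_nonneg)
      ultimately show ?thesis by (metis of_real_eq_0_iff less_irrefl)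
    qed
    have "\<mu> + n * ((cnj t * C - t * cnj C + t * cnj t * E) / (1 + t * cnj t * complex_of_real G)) = \<mu> + n * w"
      using d by (simp add: X)
    also have "\<dots> = y" by (simp add: w_def mult.assoc[symmetric] nn)
    finally show "y \<in> S" using pt[of t] by simp
  qed (use K h0 in auto)
qed


lemma cinner_expand:
  fixes u1 u2 w1 w2 :: "'a::complex_inner"
  shows "cinner (u1 + a *\<^sub>C u2) (w1 + a *\<^sub>C w2) =
    cinner u1 w1 + cnj a * cinner u1 w2 + a * cinner u2 w1 + a * cnj a * cinner u2 w2"
  by (simp add: cinner_add_left cinner_add_right cinner_scaleC_left cinner_scaleC_right algebra_simps)

lemma lin_comb:
  assumes "linear_operator D A" "x \<in> D" "y \<in> D"
  shows "y + a *\<^sub>C x \<in> D" and "A (y + a *\<^sub>C x) = A y + a *\<^sub>C A x"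
proof -
  have "a *\<^sub>C x \<in> D" "A (a *\<^sub>C x) = a *\<^sub>C A x" using assms unfolding linear_operator_def by auto
  thus "y + a *\<^sub>C x \<in> D" "A (y + a *\<^sub>C x) = A y + a *\<^sub>C A x"
    using assms unfolding linear_operator_def by auto
qed

lemma lin_nonneg:
  fixes q r :: real
  assumes "\<And>\<tau>::real. 0 \<le> q + \<tau> * r"
  shows "r = 0"
proof (rule ccontr)
  assume r: "r \<noteq> 0"
  have "0 \<le> q + (- (q + 1) / r) * r" by (rule assms)
  also have "\<dots> = -1" using r by simp
  finally show False by simp
qed

lemma curv_fin:
  fixes \<Omega> S :: "complex set" and \<mu> n :: complex
  assumes S: "S \<subseteq> \<Omega>" and K: "0 \<le> K" and h0: "0 < h0"
    and U: "\<forall>y. 0 < Re (cnj n * (y - \<mu>)) \<and> Re (cnj n * (y - \<mu>)) < h0 \<and>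
            K * (Im (cnj n * (y - \<mu>)))\<^sup>2 < Re (cnj n * (y - \<mu>)) \<longrightarrow> y \<in> S"
  shows "gamma_u \<Omega> \<mu> n \<noteq> \<infinity>"
proof -
  define U where "U = {y. 0 < Re (cnj n * (y - \<mu>))} \<inter> {y. Re (cnj n * (y - \<mu>)) < h0} \<inter>
            {y. K * (Im (cnj n * (y - \<mu>)))\<^sup>2 < Re (cnj n * (y - \<mu>))}"
  have "open U" unfolding U_def
    by (intro open_Int open_Collect_less continuous_intros)
  moreover have "U \<subseteq> \<Omega>" using U S unfolding U_def by auto
  ultimately have UI: "U \<subseteq> interior \<Omega>" by (simp add: interior_maximal)
  have key: "eta_coord \<mu> n z / (xi_coord \<mu> n z)\<^sup>2 \<le> K"
    if z: "z \<in> frontier \<Omega>" "(xi_coord \<mu> n z)\<^sup>2 + (eta_coord \<mu> n z)\<^sup>2 \<le> \<epsilon>\<^sup>2" "xi_coord \<mu> n z \<noteq> 0"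
      and e: "0 < \<epsilon>" "\<epsilon> < h0" for z \<epsilon>
  proof -
    define x where "x = xi_coord \<mu> n z"
    define y where "y = eta_coord \<mu> n z"
    have x0: "x\<^sup>2 > 0" using z(3) by (simp add: x_def)
    have "z \<notin> interior \<Omega>" using z(1) by (simp add: frontier_def)
    hence zU: "z \<notin> U" using UI by auto
    have "y\<^sup>2 \<le> \<epsilon>\<^sup>2" using z(2) unfolding x_def[symmetric] y_def[symmetric]
      by (smt (verit) zero_le_power2)
    hence "\<bar>y\<bar> \<le> \<epsilon>" using e power2_le_imp_le[of "\<bar>y\<bar>" \<epsilon>] by simp
    hence yh: "y < h0" using e by simp
    show ?thesis
    proof (cases "y \<le> 0")
      case True
      hence "y / x\<^sup>2 \<le> 0" using x0 by (simp add: divide_nonpos_pos)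
      thus ?thesis using K by (simp add: x_def y_def)
    next
      case False
      hence "\<not> K * x\<^sup>2 < y" using zU yh unfolding U_def x_def y_def xi_coord_def eta_coord_def by auto
      hence "y \<le> K * x\<^sup>2" by simp
      hence "y / x\<^sup>2 \<le> K" using x0 by (simp add: divide_le_eq)
      thus ?thesis by (simp add: x_def y_def)
    qed
  qed
  have plus: "gamma_u_plus \<Omega> \<mu> n \<le> ereal K" unfolding gamma_u_plus_def
  proof (rule lim_bound[OF _ h0])
    fix a b :: real assume "0 < a" "a \<le> b"
    hence "a\<^sup>2 \<le> b\<^sup>2" by (simp add: power_mono)
    hence "bdry_right \<Omega> \<mu> n a \<subseteq> bdry_right \<Omega> \<mu> n b" unfolding bdry_right_def by auto
    thus "(SUP z\<in>bdry_right \<Omega> \<mu> n a. curv_quot \<mu> n z) \<le> (SUP z\<in>bdry_right \<Omega> \<mu> n b. curv_quot \<mu> n z)"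
      by (rule SUP_subset_mono) simp
  next
    fix e :: real assume "0 < e" "e < h0"
    thus "(SUP z\<in>bdry_right \<Omega> \<mu> n e. curv_quot \<mu> n z) \<le> ereal K"
      using key unfolding bdry_right_def curv_quot_def by (intro SUP_least) auto
  qed
  have minus: "gamma_u_minus \<Omega> \<mu> n \<le> ereal K" unfolding gamma_u_minus_def
  proof (rule lim_bound[OF _ h0])
    fix a b :: real assume "0 < a" "a \<le> b"
    hence "a\<^sup>2 \<le> b\<^sup>2" by (simp add: power_mono)
    hence "bdry_left \<Omega> \<mu> n a \<subseteq> bdry_left \<Omega> \<mu> n b" unfolding bdry_left_def by auto
    thus "(SUP z\<in>bdry_left \<Omega> \<mu> n a. curv_quot \<mu> n z) \<le> (SUP z\<in>bdry_left \<Omega> \<mu> n b. curv_quot \<mu> n z)"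
      by (rule SUP_subset_mono) simp
  next
    fix e :: real assume "0 < e" "e < h0"
    thus "(SUP z\<in>bdry_left \<Omega> \<mu> n e. curv_quot \<mu> n z) \<le> ereal K"
      using key unfolding bdry_left_def curv_quot_def by (intro SUP_least) auto
  qed
  have "gamma_u \<Omega> \<mu> n \<le> ereal K" using plus minus by (simp add: gamma_u_def)
  thus ?thesis by auto
qed


theorem mainTheorem2:
  fixes D :: "'a::chilbert_space set" and A :: "'a \<Rightarrow> 'a" and \<mu> :: complex
  assumes "linear_operator D A"
    and "densely_defined D"
    and "closed_operator D A"
    and "interior (numerical_range D A) \<noteq> {}"
    and "numerical_range D A \<noteq> UNIV"
    and "\<mu> \<in> frontier (numerical_range D A)"
    and "infinite_upper_curvature (closure (numerical_range D A)) \<mu>"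
    and "\<mu> \<in> numerical_range D A"
  shows "eigenvalue D A \<mu>"
proof (rule ccontr)
  assume noeig: "\<not> eigenvalue D A \<mu>"
  note lin = assms(1)
  define N where "N = numerical_range D A"
  obtain f where fD: "f \<in> D" and fn: "norm f = 1" and fmu: "cinner (A f) f = \<mu>"
    using assms(8) unfolding numerical_range_def by auto
  obtain n where frame: "curvature_frame (closure N) \<mu> n" and gu: "gamma_u (closure N) \<mu> n = \<infinity>"
    using assms(7) unfolding infinite_upper_curvature_def N_def by auto
  have n1: "cmod n = 1" and half: "\<And>z. z \<in> closure N \<Longrightarrow> 0 \<le> Re (cnj n * (z - \<mu>))"
    using frame unfolding curvature_frame_def by auto
  have halfN: "\<And>z. z \<in> N \<Longrightarrow> 0 \<le> Re (cnj n * (z - \<mu>))" using half closure_subset by blast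
  have nn: "n * cnj n = 1" using n1 by (metis complex_norm_square mult.commute of_real_1 power_one)
  have ff: "cinner f f = 1"
  proof -
    have "Re (cinner f f) = 1" using fn norm_sq_cinner[of f] by simp
    thus ?thesis using cinner_self_real[of f] by simp
  qed
  define B where "B = (\<lambda>h. A h - \<mu> *\<^sub>C h)"
  define Q where "Q = (\<lambda>h. Re (cnj n * cinner (B h) h))"
  have Blin: "y + a *\<^sub>C x \<in> D \<and> B (y + a *\<^sub>C x) = B y + a *\<^sub>C B x" if "x \<in> D" "y \<in> D" for x y a
  proof -
    have "\<mu> *\<^sub>C (a *\<^sub>C x) = a *\<^sub>C (\<mu> *\<^sub>C x)" by (simp add: scaleC_scaleC mult.commute)
    thus ?thesis using lin_comb[OF lin that] unfolding B_def
      by (simp add: scaleC_add_right scaleC_diff_right algebra_simps)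
  qed
  have Bexp: "cinner (B (y + a *\<^sub>C x)) (y + a *\<^sub>C x) = cinner (B y) y + cnj a * cinner (B y) x
      + a * cinner (B x) y + a * cnj a * cinner (B x) x" if "x \<in> D" "y \<in> D" for x y a
    using Blin[OF that, of a] cinner_expand by simp
  have Bcin: "cinner (B h) h = cinner (A h) h - \<mu> * cinner h h" for h
    unfolding B_def by (simp add: cinner_diff_left cinner_scaleC_left)
  have inN: "\<mu> + cinner (B h) h / cinner h h \<in> N" if hD: "h \<in> D" and h0: "h \<noteq> 0" for h
  proof -
    define r where "r = norm h"
    have r0: "r > 0" using h0 by (simp add: r_def)
    define k where "k = complex_of_real (1 / r) *\<^sub>C h"
    have kD: "k \<in> D" and Ak: "A k = complex_of_real (1 / r) *\<^sub>C A h"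
      using lin hD unfolding linear_operator_def k_def by auto
    have kn: "norm k = 1" using r0 unfolding k_def scaleC_real by (simp add: r_def)
    have hh: "cinner h h = complex_of_real (r * r)"
      using cinner_self_real[of h] norm_sq_cinner[of h] by (simp add: r_def power2_eq_square)
    have "cinner (A k) k = cinner (complex_of_real (1 / r) *\<^sub>C A h) (complex_of_real (1 / r) *\<^sub>C h)"
      by (simp only: Ak) (simp only: k_def)
    also have "\<dots> = complex_of_real (1/r * (1/r)) * cinner (A h) h"
      by (rule cinner_real_scale_both)
    also have "\<dots> = cinner (A h) h / cinner h h" using r0 by (simp add: hh field_simps)
    also have "\<dots> = \<mu> + cinner (B h) h / cinner h h" using r0 by (simp add: Bcin hh field_simps)
    finally show ?thesis using kD kn unfolding N_def numerical_range_def by force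
  qed
  have Qnn: "0 \<le> Q h" if hD: "h \<in> D" for h
  proof (cases "h = 0")
    case True thus ?thesis by (simp add: Q_def)
  next
    case False
    define r where "r = Re (cinner h h)"
    have hh: "cinner h h = complex_of_real r" using cinner_self_real[of h] by (simp add: r_def)
    have "(norm h)\<^sup>2 > 0" using False by simp
    hence r0: "r > 0" using norm_sq_cinner[of h] by (simp add: r_def)
    have "0 \<le> Re (cnj n * ((\<mu> + cinner (B h) h / cinner h h) - \<mu>))" by (rule halfN[OF inN[OF hD False]])
    also have "Re (cnj n * ((\<mu> + cinner (B h) h / cinner h h) - \<mu>)) = Q h / r"
    proof -
      have "cnj n * ((\<mu> + cinner (B h) h / cinner h h) - \<mu>) = (cnj n * cinner (B h) h) / complex_of_real r"
        unfolding hh by simp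
      thus ?thesis by (simp only: Q_def Re_divide_of_real)
    qed
    finally show ?thesis using r0 by (simp add: zero_le_divide_iff)
  qed
  have Qtrick: "Q (y + a *\<^sub>C x) = Q y" if xD: "x \<in> D" and yD: "y \<in> D" and Qx: "Q x = 0" for x y a
  proof -
    define R where "R = Re (cnj n * (cnj a * cinner (B y) x + a * cinner (B x) y))"
    have gen: "Q (y + b *\<^sub>C x) = Q y + Re (cnj n * (cnj b * cinner (B y) x + b * cinner (B x) y))" for b
    proof -
      have bb: "b * cnj b = complex_of_real ((cmod b)\<^sup>2)" by (rule complex_norm_square[symmetric])
      have "Q (y + b *\<^sub>C x) = Q y + Re (cnj n * (cnj b * cinner (B y) x + b * cinner (B x) y))
          + (cmod b)\<^sup>2 * Q x"
        unfolding Q_def Bexp[OF xD yD] by (simp add: bb algebra_simps)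
      thus ?thesis using Qx by simp
    qed
    have "0 \<le> Q y + \<tau> * R" for \<tau> :: real
    proof -
      have "0 \<le> Q (y + (complex_of_real \<tau> * a) *\<^sub>C x)" using Blin[OF xD yD] by (intro Qnn) blast
      also have "\<dots> = Q y + \<tau> * R" unfolding gen R_def by (simp add: algebra_simps)
      finally show ?thesis .
    qed
    hence "R = 0" by (rule lin_nonneg)
    thus ?thesis using gen[of a] by (simp add: R_def)
  qed
  have Bf: "cinner (B f) f = 0" using Bcin[of f] by (simp add: ff fmu)
  have Qf: "Q f = 0" by (simp add: Q_def Bf)
  define v where "v = B f"
  have vnz: "v \<noteq> 0"
  proof
    assume "v = 0"
    hence "A f = \<mu> *\<^sub>C f" by (simp add: v_def B_def)
    moreover have "f \<noteq> 0" using fn by auto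
    ultimately show False using noeig fD unfolding eigenvalue_def by blast
  qed
  have vf: "cinner v f = 0" using Bf by (simp add: v_def)
  obtain h where hD: "h \<in> D" and Qh: "Q h > 0"
  proof -
    obtain z0 where z0: "z0 \<in> interior N" using assms(4) unfolding N_def by auto
    then obtain e where e: "e > 0" "ball z0 e \<subseteq> N" using open_contains_ball interior_subset
      by (meson mem_interior)
    define z1 where "z1 = z0 + complex_of_real (e/2) * n"
    have "dist z0 z1 < e" using e n1 by (simp add: z1_def dist_norm norm_mult)
    hence z1N: "z1 \<in> N" using e by auto
    have z0N: "z0 \<in> N" using e by auto
    obtain h where hD: "h \<in> D" and hn: "norm h = 1" and hz: "cinner (A h) h = z1"
      using z1N unfolding N_def numerical_range_def by auto
    have hh: "cinner h h = 1"
    proof -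
      have "Re (cinner h h) = 1" using hn norm_sq_cinner[of h] by simp
      thus ?thesis using cinner_self_real[of h] by simp
    qed
    have "Q h = Re (cnj n * (z1 - \<mu>))" by (simp add: Q_def Bcin hh hz)
    also have "\<dots> = Re (cnj n * (z0 - \<mu>)) + e/2 * Re (cnj n * n)"
      by (simp add: z1_def algebra_simps)
    also have "Re (cnj n * n) = 1" using nn by (simp add: mult.commute)
    finally have "Q h \<ge> e / 2" using halfN[OF z0N] by simp
    thus ?thesis using that hD e by simp
  qed
  obtain g0 where g0D: "g0 \<in> D" and vg0: "Re (cinner v g0) > 0"
  proof -
    have "v \<in> closure D" using assms(2) unfolding densely_defined_def by simp
    then obtain g0 where g0D: "g0 \<in> D" and d: "dist g0 v < norm v"
      using vnz by (metis closure_approachable zero_less_norm_iff)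
    have "(norm (v - g0))\<^sup>2 < (norm v)\<^sup>2" using d by (simp add: dist_norm norm_minus_commute power_strict_mono)
    hence "2 * Re (cinner v g0) > (norm g0)\<^sup>2" using norm_diff_sq[of v g0] by simp
    hence "Re (cinner v g0) > 0" by (smt (verit) zero_le_power2)
    thus ?thesis using that g0D by blast
  qed
  define g1 where "g1 = g0 + (- cinner g0 f) *\<^sub>C f"
  have g1D: "g1 \<in> D" using Blin[OF fD g0D] by (simp add: g1_def)
  have g1f: "cinner g1 f = 0" by (simp add: g1_def cinner_add_left cinner_scaleC_left ff)
  have vg1: "cinner v g1 = cinner v g0" by (simp add: g1_def cinner_add_right cinner_scaleC_right vf)
  define h1 where "h1 = h + (- cinner h f) *\<^sub>C f"
  have h1D: "h1 \<in> D" using Blin[OF fD hD] by (simp add: h1_def)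
  have h1f: "cinner h1 f = 0" by (simp add: h1_def cinner_add_left cinner_scaleC_left ff)
  have Qh1: "Q h1 > 0" unfolding h1_def using Qtrick[OF fD hD Qf] Qh by simp
  obtain g where gD: "g \<in> D" and gf: "cinner g f = 0" and vg: "cinner v g \<noteq> 0" and Qg: "Q g > 0"
  proof (cases "Q g1 > 0")
    case True
    moreover have "cinner v g1 \<noteq> 0" using vg1 vg0 by auto
    ultimately show ?thesis using that g1D g1f by blast
  next
    case False
    hence Qg1: "Q g1 = 0" using Qnn[OF g1D] by simp
    have c1: "cinner v g1 \<noteq> 0" using vg1 vg0 by auto
    obtain a :: complex where a: "cinner v h1 + cnj a * cinner v g1 \<noteq> 0"
    proof (cases "cinner v h1 + cinner v g1 = 0")
      case True
      have "cinner v h1 + cnj 2 * cinner v g1 = (cinner v h1 + cinner v g1) + cinner v g1"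
        by (simp add: algebra_simps)
      also have "\<dots> = cinner v g1" using True by (simp only: add_0)
      finally have e2: "cinner v h1 + cnj 2 * cinner v g1 = cinner v g1" .
      hence "cinner v h1 + cnj 2 * cinner v g1 \<noteq> 0" using c1 by metis
      thus ?thesis using that by blast
    next
      case False
      hence "cinner v h1 + cnj 1 * cinner v g1 \<noteq> 0" by simp
      thus ?thesis using that by blast
    qed
    define g where "g = h1 + a *\<^sub>C g1"
    have "g \<in> D" using Blin[OF g1D h1D] by (simp add: g_def)
    moreover have "cinner g f = 0" by (simp add: g_def cinner_add_left cinner_scaleC_left h1f g1f)
    moreover have "cinner v g \<noteq> 0" using a by (simp add: g_def cinner_add_right cinner_scaleC_right)
    moreover have "Q g > 0" using Qtrick[OF g1D h1D Qg1] Qh1 by (simp add: g_def)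
    ultimately show ?thesis using that by blast
  qed
  define G where "G = Re (cinner g g)"
  have gg: "cinner g g = complex_of_real G" using cinner_self_real[of g] by (simp add: G_def)
  have gnz: "g \<noteq> 0" using vg by auto
  have "(norm g)\<^sup>2 > 0" using gnz by simp
  hence Gpos: "G > 0" using norm_sq_cinner[of g] by (simp add: G_def)
  define c where "c = cinner v g"
  define b where "b = cinner (B g) f"
  define E where "E = cinner (B g) g"
  have QgE: "Q g = Re (cnj n * E)" by (simp add: Q_def E_def)
  have fg: "cinner f g = 0" using gf cinner_commute[of f g] by simp
  have pt: "\<mu> + (cnj t * c + t * b + t * cnj t * E) / (1 + t * cnj t * complex_of_real G) \<in> N" for t
  proof -
    define hh where "hh = f + t *\<^sub>C g"
    have hhD: "hh \<in> D" using Blin[OF gD fD] by (simp add: hh_def)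
    have "cinner hh f = 1" by (simp add: hh_def cinner_add_left cinner_scaleC_left ff gf)
    hence hnz: "hh \<noteq> 0" by auto
    have e1: "cinner (B hh) hh = cnj t * c + t * b + t * cnj t * E"
      unfolding hh_def Bexp[OF gD fD] by (simp add: Bf c_def b_def E_def v_def)
    have e2: "cinner hh hh = 1 + t * cnj t * complex_of_real G"
      unfolding hh_def cinner_expand by (simp add: ff fg gf gg)
    show ?thesis using inN[OF hhD hnz] unfolding e1 e2 .
  qed
  have den: "1 + t * cnj t * complex_of_real G = complex_of_real (1 + (cmod t)\<^sup>2 * G)" for t
    by (simp add: complex_norm_square[symmetric])
  have denpos: "1 + (cmod t)\<^sup>2 * G > 0" for t using Gpos by (simp add: add_pos_nonneg)
  have nonneg: "0 \<le> Re (cnj t * (cnj n * c) + t * (cnj n * b) + t * cnj t * (cnj n * E))" for t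
  proof -
    have "0 \<le> Re (cnj n * ((\<mu> + (cnj t * c + t * b + t * cnj t * E) / (1 + t * cnj t * complex_of_real G)) - \<mu>))"
      by (rule halfN[OF pt])
    also have "\<dots> = Re (cnj n * (cnj t * c + t * b + t * cnj t * E)) / (1 + (cmod t)\<^sup>2 * G)"
    proof -
      have "cnj n * ((\<mu> + (cnj t * c + t * b + t * cnj t * E) / (1 + t * cnj t * complex_of_real G)) - \<mu>)
          = (cnj n * (cnj t * c + t * b + t * cnj t * E)) / complex_of_real (1 + (cmod t)\<^sup>2 * G)"
        unfolding den by simp
      thus ?thesis by (simp only: Re_divide_of_real)
    qed
    finally have "0 \<le> Re (cnj n * (cnj t * c + t * b + t * cnj t * E))"
      using denpos[of t] by (simp add: zero_le_divide_iff)
    thus ?thesis by (simp add: algebra_simps)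
  qed
  have bC: "cnj n * b = - cnj (cnj n * c)"
    using Z_zero[OF nonneg] Qg QgE by simp
  have cnz: "cnj n * c \<noteq> 0" using vg n1 by (auto simp: c_def)
  have "\<exists>K h0. 0 \<le> K \<and> 0 < h0 \<and> (\<forall>y. 0 < Re (cnj n * (y - \<mu>)) \<and> Re (cnj n * (y - \<mu>)) < h0 \<and>
            K * (Im (cnj n * (y - \<mu>)))\<^sup>2 < Re (cnj n * (y - \<mu>)) \<longrightarrow> y \<in> N)"
  proof (rule fill[OF n1 Gpos cnz])
    show "0 < Re (cnj n * E)" using Qg QgE by simp
    fix t
    have "cnj n * (cnj t * c + t * b + t * cnj t * E) =
          cnj t * (cnj n * c) + t * (cnj n * b) + t * cnj t * (cnj n * E)"
      by (simp add: algebra_simps)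
    also have "\<dots> = cnj t * (cnj n * c) - t * cnj (cnj n * c) + t * cnj t * (cnj n * E)"
      unfolding bC by simp
    finally have eqX: "cnj t * (cnj n * c) - t * cnj (cnj n * c) + t * cnj t * (cnj n * E) =
          cnj n * (cnj t * c + t * b + t * cnj t * E)" by (rule sym)
    define Y where "Y = cnj t * c + t * b + t * cnj t * E"
    define d where "d = 1 + t * cnj t * complex_of_real G"
    have "n * ((cnj n * Y) / d) = ((n * cnj n) * Y) / d" by (simp only: times_divide_eq_right mult.assoc)
    also have "\<dots> = Y / d" by (simp only: nn mult.left_neutral)
    finally have e3: "n * ((cnj n * Y) / d) = Y / d" .
    show "\<mu> + n * ((cnj t * (cnj n * c) - t * cnj (cnj n * c) + t * cnj t * (cnj n * E)) / (1 + t * cnj t * complex_of_real G)) \<in> N"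
    proof -
      have "\<mu> + Y / d \<in> N" using pt[of t] unfolding Y_def d_def .
      thus ?thesis unfolding eqX Y_def[symmetric] d_def[symmetric] e3 .
    qed
  qed
  then obtain K h0 where K: "0 \<le> K" and h0: "0 < h0" and U: "\<forall>y. 0 < Re (cnj n * (y - \<mu>)) \<and> Re (cnj n * (y - \<mu>)) < h0 \<and>
            K * (Im (cnj n * (y - \<mu>)))\<^sup>2 < Re (cnj n * (y - \<mu>)) \<longrightarrow> y \<in> N" by blast
  have "gamma_u (closure N) \<mu> n \<noteq> \<infinity>" by (rule curv_fin[OF closure_subset K h0 U])
  thus False using gu by simp
qed

end
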